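(* Consider a cellular network with $n$ base stations $\mathcal{N}=\{1,\dots,n\}$, base station $i$ serving a nonempty set $\mathcal{J}_i$ of users (pairwise disjoint), channel gains $g_{kj}>0$, noise power $\sigma^2>0$, and for $\mathbf{p}>\mathbf{0}$, $\mathbf{x}\ge\mathbf{0}$, $\mathbf{r}>\mathbf{0}$, $$f_i(\mathbf{x};\mathbf{r},\mathbf{p})=\sum_{j\in\mathcal{J}_i}\frac{r_{ij}}{\log\Big(1+\frac{p_i g_{ij}}{\sum_{k\ne i} p_k g_{kj} x_k+\sigma^2}\Big)}.$$ Let $\mathbf{d}_{\min}>\mathbf{0}$ and consider Problem P0: $$\min_{\mathbf{p}>\mathbf{0},\ \mathbf{r}>\mathbf{0},\ \mathbf{0}<\mathbf{x}\le\mathbf{1}} \mathbf{x}^T\mathbf{p}\quad\text{s.t.}\quad \mathbf{x}=\mathbf{f}(\mathbf{x};\mathbf{r},\mathbf{p}),\quad \mathbf{r}\ge\mathbf{d}_{\min}.$$ Then the optimal solution $(\mathbf{p}^\star,\mathbf{r}^\star,\mathbf{x}^\star)$ of Problem P0 has load vector $\mathbf{x}^\star=\mathbf{1}$.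
   Context: Vector inequalities are componentwise; $\mathbf{1}$ is the all-ones vector; $\log$ is natural logarithm. *)

theory Defs
  imports Complex_Main
begin

text \<open>J i is the set of users served by base station i; g k j is the channel gain from
  base station k to user j; s2 is the noise power sigma^2; log is natural log (ln).\<close>

definition load_f ::
  "('n::finite \<Rightarrow> 'u set) \<Rightarrow> ('n \<Rightarrow> 'u \<Rightarrow> real) \<Rightarrow> real \<Rightarrow>
   ('n \<Rightarrow> real) \<Rightarrow> ('n \<Rightarrow> 'u \<Rightarrow> real) \<Rightarrow> ('n \<Rightarrow> real) \<Rightarrow> 'n \<Rightarrow> real" where
  "load_f J g s2 x r p i =
     (\<Sum>j\<in>J i. r i j /
        ln (1 + p i * g i j / ((\<Sum>k\<in>UNIV - {i}. p k * g k j * x k) + s2)))"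

definition P0_feasible ::
  "('n::finite \<Rightarrow> 'u set) \<Rightarrow> ('n \<Rightarrow> 'u \<Rightarrow> real) \<Rightarrow> real \<Rightarrow> ('n \<Rightarrow> 'u \<Rightarrow> real) \<Rightarrow>
   ('n \<Rightarrow> real) \<Rightarrow> ('n \<Rightarrow> 'u \<Rightarrow> real) \<Rightarrow> ('n \<Rightarrow> real) \<Rightarrow> bool" where
  "P0_feasible J g s2 dmin p r x \<longleftrightarrow>
     (\<forall>i. p i > 0) \<and>
     (\<forall>i. \<forall>j\<in>J i. r i j > 0) \<and>
     (\<forall>i. 0 < x i \<and> x i \<le> 1) \<and>
     (\<forall>i. x i = load_f J g s2 x r p i) \<and>
     (\<forall>i. \<forall>j\<in>J i. r i j \<ge> dmin i j)"

definition P0_objective :: "('n::finite \<Rightarrow> real) \<Rightarrow> ('n \<Rightarrow> real) \<Rightarrow> real" where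
  "P0_objective x p = (\<Sum>i\<in>UNIV. x i * p i)"

definition P0_optimal ::
  "('n::finite \<Rightarrow> 'u set) \<Rightarrow> ('n \<Rightarrow> 'u \<Rightarrow> real) \<Rightarrow> real \<Rightarrow> ('n \<Rightarrow> 'u \<Rightarrow> real) \<Rightarrow>
   ('n \<Rightarrow> real) \<Rightarrow> ('n \<Rightarrow> 'u \<Rightarrow> real) \<Rightarrow> ('n \<Rightarrow> real) \<Rightarrow> bool" where
  "P0_optimal J g s2 dmin p r x \<longleftrightarrow>
     P0_feasible J g s2 dmin p r x \<and>
     (\<forall>p' r' x'. P0_feasible J g s2 dmin p' r' x' \<longrightarrow>
        P0_objective x p \<le> P0_objective x' p')"

end

theory Submission
  imports Defs
begin

lemma ln_lt: assumes "0 < (y::real)" "y \<noteq> 1" shows "ln y < y - 1"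
proof -
  have q: "sqrt y > 0" "sqrt y \<noteq> 1" using assms by auto
  have "ln y = 2 * ln (sqrt y)" using assms by (simp add: ln_sqrt)
  also have "\<dots> \<le> 2 * (sqrt y - 1)" using ln_le_minus_one[OF q(1)] by simp
  also have "\<dots> < y - 1"
  proof -
    have "(sqrt y - 1)^2 > 0" using q by simp
    then show ?thesis using assms by (simp add: power2_eq_square algebra_simps)
  qed
  finally show ?thesis .
qed

lemma conc_strict:
  fixes a s :: real assumes "0 < a" "a < 1" "0 < s"
  shows "a * ln (1+s) < ln (1 + a*s)"
proof -
  define m where "m = 1 + a*s"
  have m: "m > 1" using assms by (simp add: m_def)
  have 1: "ln (1/m) < 1/m - 1" using m by (intro ln_lt) auto
  have "a*s < s" using assms by simp
  hence "(1+s)/m \<noteq> 1" using m by (auto simp: m_def)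
  hence 2: "ln ((1+s)/m) < (1+s)/m - 1" using m assms by (intro ln_lt) auto
  have e1: "ln (1/m) = - ln m" using m by (simp add: ln_div)
  have e2: "ln ((1+s)/m) = ln (1+s) - ln m" using m assms by (simp add: ln_div)
  have "(1-a) * ln (1/m) + a * ln ((1+s)/m) < (1-a)*(1/m - 1) + a*((1+s)/m - 1)"
    using 1 2 assms by (intro add_strict_mono mult_strict_left_mono) auto
  also have "\<dots> = 0" using m by (simp add: m_def field_simps)
  finally have "(1-a) * (- ln m) + a * (ln (1+s) - ln m) < 0" using e1 e2 by simp
  then have "a * ln (1+s) < ln m" by (simp add: algebra_simps)
  then show ?thesis by (simp add: m_def)
qed

lemma conc_weak:
  fixes a s :: real assumes "0 < a" "a \<le> 1" "0 < s"
  shows "a * ln (1+s) \<le> ln (1 + a*s)"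
  using conc_strict[OF assms(1) _ assms(3)] assms by (cases "a = 1") auto

theorem lemma2:
  fixes J :: "'n::finite \<Rightarrow> 'u set"
    and g :: "'n \<Rightarrow> 'u \<Rightarrow> real"
    and s2 :: real
    and dmin :: "'n \<Rightarrow> 'u \<Rightarrow> real"
    and p_opt x_opt :: "'n \<Rightarrow> real"
    and r_opt :: "'n \<Rightarrow> 'u \<Rightarrow> real"
  assumes J_finite: "\<And>i. finite (J i)"
    and J_nonempty: "\<And>i. J i \<noteq> {}"
    and J_disjoint: "\<And>i i'. i \<noteq> i' \<Longrightarrow> J i \<inter> J i' = {}"
    and g_pos: "\<And>k i j. j \<in> J i \<Longrightarrow> g k j > 0"
    and s2_pos: "s2 > 0"
    and dmin_pos: "\<And>i j. j \<in> J i \<Longrightarrow> dmin i j > 0"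
    and opt: "P0_optimal J g s2 dmin p_opt r_opt x_opt"
  shows "\<forall>i. x_opt i = 1"
proof (rule ccontr)
  let ?p = p_opt and ?r = r_opt and ?x = x_opt
  have feas: "P0_feasible J g s2 dmin ?p ?r ?x" and
    best: "\<And>p' r' x'. P0_feasible J g s2 dmin p' r' x' \<Longrightarrow> P0_objective ?x ?p \<le> P0_objective x' p'"
    using opt unfolding P0_optimal_def by auto
  have pp: "\<And>i. ?p i > 0" and rp: "\<And>i j. j \<in> J i \<Longrightarrow> ?r i j > 0"
    and xb: "\<And>i. 0 < ?x i \<and> ?x i \<le> 1" and fx: "\<And>i. ?x i = load_f J g s2 ?x ?r ?p i"
    and rd: "\<And>i j. j \<in> J i \<Longrightarrow> ?r i j \<ge> dmin i j"
    using feas unfolding P0_feasible_def by auto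
  assume "\<not> (\<forall>i. ?x i = 1)"
  then obtain i0 where i0: "?x i0 < 1" using xb by (metis order_le_less)
  define I where "I m j = (\<Sum>k\<in>UNIV - {m}. ?p k * g k j * ?x k) + s2" for m j
  define s where "s m j = ?p m * g m j / I m j" for m j
  have Ipos: "I m j > 0" if "j \<in> J m" for m j
  proof -
    have "(\<Sum>k\<in>UNIV - {m}. ?p k * g k j * ?x k) \<ge> 0"
      using pp xb g_pos[OF that] by (intro sum_nonneg) (auto intro!: mult_nonneg_nonneg less_imp_le)
    then show ?thesis using s2_pos by (simp add: I_def)
  qed
  have spos: "s m j > 0" if "j \<in> J m" for m j
    using Ipos[OF that] pp g_pos[OF that] by (simp add: s_def)
  have load: "?x m = (\<Sum>j\<in>J m. ?r m j / ln (1 + s m j))" for m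
    using fx[of m] by (simp add: load_f_def s_def I_def)
  define A where "A m = (\<Sum>j\<in>J m. ?r m j / ln (1 + ?x m * s m j))" for m
  have Ale: "A m \<le> 1" for m
  proof -
    have "A m \<le> (\<Sum>j\<in>J m. ?r m j / (?x m * ln (1 + s m j)))"
      unfolding A_def
    proof (rule sum_mono)
      fix j assume j: "j \<in> J m"
      have "?x m * ln (1 + s m j) \<le> ln (1 + ?x m * s m j)"
        using conc_weak[of "?x m" "s m j"] xb spos[OF j] by auto
      moreover have "0 < ?x m * ln (1 + s m j)" using xb spos[OF j] by simp
      ultimately show "?r m j / ln (1 + ?x m * s m j) \<le> ?r m j / (?x m * ln (1 + s m j))"
        using rp[OF j] by (intro divide_left_mono) auto
    qed
    also have "\<dots> = (\<Sum>j\<in>J m. ?r m j / ln (1 + s m j)) / ?x m"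
      by (simp add: sum_divide_distrib field_simps)
    also have "\<dots> = 1" using load[of m] xb[of m] by simp
    finally show ?thesis .
  qed
  have Alt: "A i0 < 1"
  proof -
    have "A i0 < (\<Sum>j\<in>J i0. ?r i0 j / (?x i0 * ln (1 + s i0 j)))"
      unfolding A_def
    proof (rule sum_strict_mono[OF J_finite J_nonempty])
      fix j assume j: "j \<in> J i0"
      have "?x i0 * ln (1 + s i0 j) < ln (1 + ?x i0 * s i0 j)"
        using conc_strict[of "?x i0" "s i0 j"] xb i0 spos[OF j] by auto
      moreover have "0 < ?x i0 * ln (1 + s i0 j)" using xb spos[OF j] by simp
      ultimately show "?r i0 j / ln (1 + ?x i0 * s i0 j) < ?r i0 j / (?x i0 * ln (1 + s i0 j))"
        using rp[OF j] by (intro divide_strict_left_mono) auto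
    qed
    also have "\<dots> = (\<Sum>j\<in>J i0. ?r i0 j / ln (1 + s i0 j)) / ?x i0"
      by (simp add: sum_divide_distrib field_simps)
    also have "\<dots> = 1" using load[of i0] xb[of i0] by simp
    finally show ?thesis .
  qed
  have Apos: "A m > 0" for m
    unfolding A_def
  proof (intro sum_pos J_finite J_nonempty)
    fix j assume j: "j \<in> J m"
    have "?x m * s m j > 0" using xb spos[OF j] by simp
    then show "0 < ?r m j / ln (1 + ?x m * s m j)" using rp[OF j] by simp
  qed
  define c where "c m = (if m = i0 then A i0 else 1)" for m
  have cpos: "0 < c m" and cle: "c m \<le> 1" for m using Apos Alt by (auto simp: c_def)
  have Ac: "A m \<le> c m" for m using Ale by (auto simp: c_def)
  define p' where "p' m = ?x m * ?p m * c m" for m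
  have p'pos: "p' m > 0" for m using xb pp cpos by (simp add: p'_def)
  define I' where "I' m j = (\<Sum>k\<in>UNIV - {m}. p' k * g k j * 1) + s2" for m j
  define S' where "S' m j = p' m * g m j / I' m j" for m j
  have I'pos: "I' m j > 0" if "j \<in> J m" for m j
  proof -
    have "(\<Sum>k\<in>UNIV - {m}. p' k * g k j * 1) \<ge> 0"
      using p'pos g_pos[OF that] by (intro sum_nonneg) (auto intro!: mult_nonneg_nonneg less_imp_le)
    then show ?thesis using s2_pos by (simp add: I'_def)
  qed
  have I'le: "I' m j \<le> I m j" if "j \<in> J m" for m j
    unfolding I'_def I_def
  proof (rule add_right_mono, rule sum_mono)
    fix k
    have "p' k \<le> ?x k * ?p k" using cle[of k] xb pp by (simp add: p'_def mult_left_le)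
    then show "p' k * g k j * 1 \<le> ?p k * g k j * ?x k"
      using g_pos[OF that, of k] by (simp add: mult_right_mono algebra_simps)
  qed
  have S'ge: "S' m j \<ge> c m * (?x m * s m j)" if j: "j \<in> J m" for m j
  proof -
    have "c m * (?x m * s m j) = p' m * g m j / I m j" by (simp add: s_def p'_def)
    also have "\<dots> \<le> p' m * g m j / I' m j"
      using I'pos[OF j] I'le[OF j] p'pos[of m] g_pos[OF j, of m]
      by (intro divide_left_mono) (auto intro: mult_nonneg_nonneg less_imp_le)
    finally show ?thesis by (simp add: S'_def)
  qed
  have S'pos: "S' m j > 0" if "j \<in> J m" for m j
    using I'pos[OF that] p'pos g_pos[OF that] by (simp add: S'_def)
  define lam where "lam m = (\<Sum>j\<in>J m. ?r m j / ln (1 + S' m j))" for m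
  have lampos: "lam m > 0" for m
    unfolding lam_def
  proof (intro sum_pos J_finite J_nonempty)
    fix j assume j: "j \<in> J m"
    show "0 < ?r m j / ln (1 + S' m j)" using rp[OF j] S'pos[OF j] by simp
  qed
  have lamle: "lam m \<le> 1" for m
  proof -
    have "lam m \<le> (\<Sum>j\<in>J m. ?r m j / (c m * ln (1 + ?x m * s m j)))"
      unfolding lam_def
    proof (rule sum_mono)
      fix j assume j: "j \<in> J m"
      have xs: "?x m * s m j > 0" using xb spos[OF j] by simp
      have "c m * ln (1 + ?x m * s m j) \<le> ln (1 + c m * (?x m * s m j))"
        using conc_weak[OF cpos cle xs] .
      also have "\<dots> \<le> ln (1 + S' m j)"
      proof -
        have "0 < c m * (?x m * s m j)" using cpos[of m] xs by simp
        then show ?thesis using S'ge[OF j] by (subst ln_le_cancel_iff) auto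
      qed
      finally have 1: "c m * ln (1 + ?x m * s m j) \<le> ln (1 + S' m j)" .
      have "0 < c m * ln (1 + ?x m * s m j)" using cpos[of m] xs by simp
      then show "?r m j / ln (1 + S' m j) \<le> ?r m j / (c m * ln (1 + ?x m * s m j))"
        using 1 rp[OF j] by (intro divide_left_mono) auto
    qed
    also have "\<dots> = A m / c m"
      by (simp add: A_def sum_divide_distrib field_simps)
    also have "\<dots> \<le> 1" using Ac[of m] cpos[of m] by simp
    finally show ?thesis .
  qed
  define r' where "r' m j = ?r m j / lam m" for m j
  define x' :: "'n \<Rightarrow> real" where "x' = (\<lambda>_. 1)"
  have feas': "P0_feasible J g s2 dmin p' r' x'"
    unfolding P0_feasible_def
  proof (intro conjI allI ballI)
    fix m show "p' m > 0" by (rule p'pos)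
    show "0 < x' m" "x' m \<le> 1" by (auto simp: x'_def)
  next
    fix m j assume j: "j \<in> J m"
    show "r' m j > 0" using rp[OF j] lampos[of m] by (simp add: r'_def)
    have "?r m j \<le> ?r m j / lam m"
      using rp[OF j] lampos[of m] lamle[of m] by (simp add: le_divide_eq mult_left_le)
    then show "dmin m j \<le> r' m j" using rd[OF j] by (simp add: r'_def)
  next
    fix m
    have "load_f J g s2 x' r' p' m = (\<Sum>j\<in>J m. ?r m j / ln (1 + S' m j)) / lam m"
      by (simp add: load_f_def x'_def r'_def S'_def I'_def sum_divide_distrib mult.commute)
    also have "\<dots> = 1" using lampos[of m] by (simp add: lam_def)
    finally show "x' m = load_f J g s2 x' r' p' m" by (simp add: x'_def)
  qed
  have "P0_objective x' p' < P0_objective ?x ?p"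
    unfolding P0_objective_def
  proof (rule sum_strict_mono_ex1)
    show "finite (UNIV :: 'n set)" by simp
    show "\<forall>m\<in>UNIV. x' m * p' m \<le> ?x m * ?p m"
      using cle xb pp by (auto simp: x'_def p'_def mult_left_le)
    have "c i0 < 1" using Alt by (simp add: c_def)
    then show "\<exists>m\<in>UNIV. x' m * p' m < ?x m * ?p m"
    proof -
      have "0 < ?x i0 * ?p i0" using xb[of i0] pp[of i0] by simp
      then have "?x i0 * ?p i0 * c i0 < ?x i0 * ?p i0" using \<open>c i0 < 1\<close>
        using mult_strict_left_mono[of "c i0" 1 "?x i0 * ?p i0"] by simp
      then show ?thesis by (auto simp: x'_def p'_def)
    qed
  qed
  with best[OF feas'] show False by simp
qed

end
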